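(* For every $1$-Sperner hypergraph ${\cal H}=(V,{\cal E})$ with ${\cal E}\neq\emptyset$ and ${\cal E}\neq\{\emptyset\}$, there exists a vector $x\in\mathbb{R}^V_{+}$ (nonnegative entries) such that $A^{\cal H}x=\mathbf{1}$ and $\mathbf{1}^\top x\ge1$.
   Context: A hypergraph ${\cal H}=(V,{\cal E})$ consists of a finite vertex set $V$ and a set ${\cal E}$ of subsets of $V$. It is $1$-Sperner if every two distinct hyperedges $e,f$ satisfy $\min\{|e\setminus f|,|f\setminus e|\}=1$. The incidence matrix $A^{\cal H}\in\{0,1\}^{{\cal E}\times V}$ has rows indexed by hyperedges and columns by vertices, with entry $1$ at $(e,v)$ iff $v\in e$. $\mathbf{1}$ denotes the all-ones vector of appropriate dimension. *)

theory Defs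
  imports Complex_Main
begin

definition hypergraph :: "'a set \<Rightarrow> 'a set set \<Rightarrow> bool" where
  "hypergraph V E \<longleftrightarrow> finite V \<and> (\<forall>e\<in>E. e \<subseteq> V)"

definition one_sperner :: "'a set set \<Rightarrow> bool" where
  "one_sperner E \<longleftrightarrow>
     (\<forall>e\<in>E. \<forall>f\<in>E. e \<noteq> f \<longrightarrow> min (card (e - f)) (card (f - e)) = 1)"

definition incidence :: "'a set \<Rightarrow> 'a \<Rightarrow> real" where
  "incidence e v = (if v \<in> e then 1 else 0)"

end

theory Submission
  imports Defs
begin

lemma exists_z:
  fixes E :: "'a set set"
  assumes fin: "finite E" "\<forall>e\<in>E. finite e" and sp: "one_sperner E"
    and ne: "E \<noteq> {}" "{} \<notin> E"
  shows "\<exists>z. (\<exists>e\<in>E. z\<in>e) \<and> (\<forall>e\<in>E. \<forall>f\<in>E. z\<in>e \<longrightarrow> z\<notin>f \<longrightarrow> e - {z} \<subseteq> f)"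
proof -
  have sp': "\<And>e f. e\<in>E \<Longrightarrow> f\<in>E \<Longrightarrow> e\<noteq>f \<Longrightarrow> min (card (e-f)) (card (f-e)) = 1"
    using sp unfolding one_sperner_def by blast
  have "Min (card ` E) \<in> card ` E" using fin ne by simp
  then obtain e0 where e0: "e0 \<in> E" "card e0 = Min (card ` E)" by auto
  have e0min: "\<And>f. f \<in> E \<Longrightarrow> card e0 \<le> card f" using e0 fin by simp
  have fe0: "finite e0" using e0 fin by auto
  have e0ne: "e0 \<noteq> {}" using e0 ne by auto
  have F1: "card (e0 - f) = 1" if f: "f\<in>E" "f\<noteq>e0" for f
  proof -
    have "card (e0-f) \<le> card (f - e0)"
      using card_le_sym_Diff[of e0 f] fe0 fin f e0min by auto
    thus ?thesis using sp'[OF e0(1) f(1)] f(2) by (auto simp: min_def split: if_splits)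
  qed
  have phi: "\<exists>a. e0 - f = {a}" if f: "f\<in>E" "f\<noteq>e0" for f
    using F1[OF f] by (simp add: card_1_singleton_iff)
  show ?thesis
  proof (cases "\<exists>z\<in>e0. \<forall>f\<in>E. z\<in>f")
    case True
    then show ?thesis using e0 by blast
  next
    case False
    hence ex: "\<forall>z\<in>e0. \<exists>f\<in>E. z\<notin>f" by blast
    define \<mu> where "\<mu> z = Min ((\<lambda>f. card (f - e0)) ` {f\<in>E. z\<notin>f})" for z
    have mule: "\<mu> z \<le> card (f - e0)" if "f\<in>E" "z\<notin>f" for z f
      unfolding \<mu>_def using that fin by (intro Min_le) auto
    have muin: "\<exists>g\<in>E. z\<notin>g \<and> \<mu> z = card (g - e0)" if "z \<in> e0" for z
    proof -
      have "\<mu> z \<in> (\<lambda>f. card (f - e0)) ` {f\<in>E. z\<notin>f}"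
        unfolding \<mu>_def using ex that fin by (intro Min_in) auto
      thus ?thesis by auto
    qed
    have "Max (\<mu> ` e0) \<in> \<mu> ` e0" using fe0 e0ne by simp
    then obtain z where z: "z \<in> e0" "\<mu> z = Max (\<mu> ` e0)" by auto
    have zmax: "\<And>y. y \<in> e0 \<Longrightarrow> \<mu> y \<le> \<mu> z" using z fe0 by simp
    show ?thesis
    proof (intro exI[of _ z] conjI ballI impI)
      show "\<exists>e\<in>E. z \<in> e" using e0 z by blast
    next
      fix e f assume ef: "e\<in>E" "f\<in>E" "z\<in>e" "z\<notin>f"
      have "f \<noteq> e0" using z ef by auto
      then obtain a where "e0 - f = {a}" using phi ef by blast
      hence e0f: "e0 - f = {z}" using z ef by auto
      show "e - {z} \<subseteq> f"
      proof (cases "e = e0")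
        case True then show ?thesis using e0f by blast
      next
        case ne0: False
        obtain y where e0e: "e0 - e = {y}" using phi[OF ef(1) ne0] by blast
        have y: "y \<in> e0" "y \<noteq> z" "y \<notin> e" using e0e ef by auto
        show ?thesis
        proof (rule ccontr)
          assume "\<not> e - {z} \<subseteq> f"
          then obtain w where w: "w \<in> e" "w \<notin> f" "w \<noteq> z" by blast
          have fine: "finite e" "finite f" using fin ef by auto
          have "card (e - f) \<noteq> 1"
          proof
            assume "card (e - f) = 1"
            then obtain u where "e - f = {u}" by (auto simp: card_1_singleton_iff)
            thus False using w ef by (metis DiffI singletonD)
          qed
          hence "card (f - e) = 1" using sp'[OF ef(1) ef(2)] ef by (cases "e = f") (auto simp: min_def split: if_splits)
          then obtain u where "f - e = {u}" by (auto simp: card_1_singleton_iff)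
          moreover have "y \<in> f - e" using y e0f by auto
          ultimately have fe: "f - e = {y}" by auto
          have sub1: "f - e0 \<subseteq> e - e0" using fe y by auto
          have "w \<notin> e0" using w e0f by auto
          hence "w \<in> (e - e0) - (f - e0)" using w by auto
          hence "f - e0 \<subset> e - e0" using sub1 by auto
          hence lt: "card (f - e0) < card (e - e0)" using fine by (intro psubset_card_mono) auto
          have le: "\<mu> y \<le> card (f - e0)" using zmax[OF y(1)] mule[OF ef(2) ef(4)] by simp
          obtain g where g: "g \<in> E" "y \<notin> g" "\<mu> y = card (g - e0)" using muin[OF y(1)] by blast
          have fing: "finite g" using g fin by auto
          have "g \<noteq> e0" using g y by auto
          then obtain b where "e0 - g = {b}" using phi g by blast
          hence e0g: "e0 - g = {y}" using g y by auto
          have "g \<noteq> f" using g y e0f by auto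
          have gf: "g - e0 \<subseteq> f - e0"
          proof (cases "card (g - f) = 1")
            case True
            then obtain u where u: "g - f = {u}" by (auto simp: card_1_singleton_iff)
            have "z \<in> g - f" using e0g z y ef by auto
            hence "g - f = {z}" using u by auto
            thus ?thesis using z by auto
          next
            case False
            hence "card (f - g) = 1" using sp'[OF g(1) ef(2) \<open>g \<noteq> f\<close>] by (auto simp: min_def split: if_splits)
            then obtain u where u: "f - g = {u}" by (auto simp: card_1_singleton_iff)
            have "y \<in> f - g" using g y e0f by auto
            hence "f - g = {y}" using u by auto
            hence s2: "f - e0 \<subseteq> g - e0" using y by auto
            have "card (g - e0) \<le> card (f - e0)" using g le by simp
            moreover have "card (f - e0) \<le> card (g - e0)" using s2 fing by (intro card_mono) auto
            ultimately have "f - e0 = g - e0" using s2 fing by (intro card_subset_eq) auto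
            thus ?thesis by simp
          qed
          have "g - e = {}" using gf sub1 e0g e0e by auto
          moreover have "g \<noteq> e" using g le lt by auto
          ultimately show False using sp'[OF g(1) ef(1)] by (metis card.empty min_def zero_neq_one zero_le)
        qed
      qed
    qed
  qed
qed

lemma core:
  fixes V :: "'a set" and E :: "'a set set"
  assumes "finite V" "\<forall>e\<in>E. e \<subseteq> V" "one_sperner E" "E \<noteq> {}" "{} \<notin> E"
  shows "\<exists>x :: 'a \<Rightarrow> real. (\<forall>v. x v \<ge> 0) \<and> (\<forall>e\<in>E. sum x e = 1)"
  using assms
proof (induction "card V" arbitrary: V E rule: less_induct)
  case less
  note finV = less.prems(1) and sub = less.prems(2) and sp = less.prems(3)
    and ne = less.prems(4) and nemp = less.prems(5)
  have sp': "\<And>e f. e\<in>E \<Longrightarrow> f\<in>E \<Longrightarrow> e\<noteq>f \<Longrightarrow> min (card (e-f)) (card (f-e)) = 1"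
    using sp unfolding one_sperner_def by blast
  have finE: "finite E" using finV sub by (metis Pow_iff finite_Pow_iff finite_subset subsetI)
  have fine: "\<forall>e\<in>E. finite e" using finV sub finite_subset by blast
  obtain z where z: "\<exists>e\<in>E. z\<in>e" and zp: "\<forall>e\<in>E. \<forall>f\<in>E. z\<in>e \<longrightarrow> z\<notin>f \<longrightarrow> e - {z} \<subseteq> f"
    using exists_z[OF finE fine sp ne nemp] by blast
  have zV: "z \<in> V" using z sub by blast
  have ltV: "card (V - {z}) < card V" using zV finV by (meson card_Diff1_less)
  define E1 where "E1 = (\<lambda>e. e - {z}) ` {e\<in>E. z\<in>e}"
  define E2 where "E2 = {f\<in>E. z\<notin>f}"
  have spsub: "one_sperner F" if "F \<subseteq> E" for F
    using sp that unfolding one_sperner_def by blast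
  show ?case
  proof (cases "{} \<in> E1")
    case True
    then obtain e where e: "e \<in> E" "z \<in> e" "e - {z} = {}" unfolding E1_def by auto
    hence ez: "e = {z}" by auto
    have Ez: "\<And>e'. e' \<in> E \<Longrightarrow> z \<in> e' \<Longrightarrow> e' = {z}"
    proof (rule ccontr)
      fix e' assume h: "e' \<in> E" "z \<in> e'" "e' \<noteq> {z}"
      have "{z} - e' = {}" using h by auto
      thus False using sp'[OF e(1) h(1)] h ez by (metis card.empty min_def zero_neq_one zero_le)
    qed
    show ?thesis
    proof (cases "E2 = {}")
      case True
      show ?thesis
      proof (rule exI[of _ "\<lambda>v. if v = z then 1 else 0"], intro conjI allI ballI)
        fix e assume "e \<in> E"
        hence "e = {z}" using True Ez by (auto simp: E2_def)
        thus "(\<Sum>v\<in>e. if v = z then 1 else 0 :: real) = 1" by simp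
      qed simp
    next
      case False
      have "\<exists>x :: 'a \<Rightarrow> real. (\<forall>v. x v \<ge> 0) \<and> (\<forall>e\<in>E2. sum x e = 1)"
        apply (rule less.hyps[OF ltV])
        using finV sub nemp False spsub[of E2] by (auto simp: E2_def)
      then obtain x :: "'a \<Rightarrow> real" where x: "\<forall>v. x v \<ge> 0" "\<forall>e\<in>E2. sum x e = 1" by blast
      show ?thesis
      proof (rule exI[of _ "x(z := 1)"], intro conjI allI ballI)
        fix v show "0 \<le> (x(z := 1)) v" using x by auto
      next
        fix e assume e: "e \<in> E"
        show "sum (x(z := 1)) e = 1"
        proof (cases "z \<in> e")
          case True then have "e = {z}" using Ez e by simp
          then show ?thesis by simp
        next
          case False
          hence "sum (x(z := 1)) e = sum x e" by (intro sum.cong) auto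
          then show ?thesis using x False e by (simp add: E2_def)
        qed
      qed
    qed
  next
    case False
    have E1ne: "E1 \<noteq> {}" using z unfolding E1_def by blast
    have sp1: "one_sperner E1"
      unfolding one_sperner_def E1_def
    proof (intro ballI impI)
      fix a b assume a: "a \<in> (\<lambda>e. e - {z}) ` {e \<in> E. z \<in> e}" and b: "b \<in> (\<lambda>e. e - {z}) ` {e \<in> E. z \<in> e}"
        and ab: "a \<noteq> b"
      obtain e where e: "e \<in> E" "z \<in> e" "a = e - {z}" using a by auto
      obtain f where f: "f \<in> E" "z \<in> f" "b = f - {z}" using b by auto
      have "a - b = e - f" "b - a = f - e" using e f by auto
      moreover have "e \<noteq> f" using e f ab by auto
      ultimately show "min (card (a - b)) (card (b - a)) = 1" using sp'[OF e(1) f(1)] by simp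
    qed
    have "\<exists>x :: 'a \<Rightarrow> real. (\<forall>v. x v \<ge> 0) \<and> (\<forall>e\<in>E1. sum x e = 1)"
      apply (rule less.hyps[OF ltV])
      using finV sub False E1ne sp1 by (auto simp: E1_def)
    then obtain x1 :: "'a \<Rightarrow> real" where x1: "\<forall>v. x1 v \<ge> 0" "\<forall>e\<in>E1. sum x1 e = 1" by blast
    define V1 where "V1 = \<Union>E1"
    define s where "s = sum x1 V1"
    have finV1: "finite V1" unfolding V1_def E1_def using finV sub
      by (intro finite_subset[OF _ finV]) auto
    have zV1: "z \<notin> V1" unfolding V1_def E1_def by auto
    obtain e1 where e1: "e1 \<in> E1" using E1ne by blast
    have "sum x1 e1 \<le> s" unfolding s_def
      using e1 finV1 x1(1) by (intro sum_mono2) (auto simp: V1_def)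
    hence s1: "1 \<le> s" using x1 e1 by simp
    define x :: "'a \<Rightarrow> real" where "x v = (if v = z then 1 - 1/s else if v \<in> V1 then x1 v / s else 0)" for v
    show ?thesis
    proof (rule exI[of _ x], intro conjI allI ballI)
      fix v show "0 \<le> x v" using s1 x1 by (auto simp: x_def)
    next
      fix e assume e: "e \<in> E"
      have fe: "finite e" using fine e by auto
      show "sum x e = 1"
      proof (cases "z \<in> e")
        case True
        have eE1: "e - {z} \<in> E1" using e True by (auto simp: E1_def)
        hence sV1: "e - {z} \<subseteq> V1" by (auto simp: V1_def)
        have "sum x e = x z + sum x (e - {z})" using True fe by (metis sum.remove)
        also have "sum x (e - {z}) = sum (\<lambda>v. x1 v / s) (e - {z})"
          using sV1 by (intro sum.cong) (auto simp: x_def)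
        also have "\<dots> = sum x1 (e - {z}) / s" by (simp add: sum_divide_distrib)
        also have "\<dots> = 1 / s" using x1 eE1 by simp
        finally show ?thesis by (simp add: x_def)
      next
        case False
        have V1e: "V1 \<subseteq> e" unfolding V1_def E1_def using zp e False by blast
        have "sum x e = sum x V1 + sum x (e - V1)" using V1e fe
          by (metis add.commute sum.subset_diff)
        also have "sum x (e - V1) = 0" using False by (intro sum.neutral) (auto simp: x_def)
        also have "sum x V1 = sum (\<lambda>v. x1 v / s) V1"
          using zV1 by (intro sum.cong) (auto simp: x_def)
        also have "\<dots> = 1" using s1 by (simp add: sum_divide_distrib[symmetric] s_def)
        finally show ?thesis by simp
      qed
    qed
  qed
qed

theorem lemma13:
  fixes V :: "'a set" and E :: "'a set set"
  assumes "hypergraph V E"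
    and "one_sperner E"
    and "E \<noteq> {}"
    and "E \<noteq> {{}}"
  shows "\<exists>x :: 'a \<Rightarrow> real.
           (\<forall>v\<in>V. x v \<ge> 0)
         \<and> (\<forall>e\<in>E. (\<Sum>v\<in>V. incidence e v * x v) = 1)
         \<and> (\<Sum>v\<in>V. x v) \<ge> 1"
proof -
  have finV: "finite V" and sub: "\<forall>e\<in>E. e \<subseteq> V" using assms(1) by (auto simp: hypergraph_def)
  have nemp: "{} \<notin> E"
  proof
    assume h: "{} \<in> E"
    then obtain f where f: "f \<in> E" "f \<noteq> {}" using assms(3,4) by blast
    have "min (card ({} - f)) (card (f - {})) = 1" using assms(2) h f unfolding one_sperner_def by metis
    thus False by simp
  qed
  obtain x :: "'a \<Rightarrow> real" where x: "\<forall>v. x v \<ge> 0" "\<forall>e\<in>E. sum x e = 1"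
    using core[OF finV sub assms(2,3) nemp] by blast
  have inc: "(\<Sum>v\<in>V. incidence e v * x v) = sum x e" if "e \<in> E" for e
  proof -
    have "(\<Sum>v\<in>V. incidence e v * x v) = (\<Sum>v\<in>V. if v \<in> e then x v else 0)"
      by (intro sum.cong) (auto simp: incidence_def)
    also have "\<dots> = sum x (V \<inter> e)" using finV by (simp add: sum.inter_restrict)
    also have "V \<inter> e = e" using sub that by auto
    finally show ?thesis .
  qed
  obtain e where e: "e \<in> E" using assms(3) by blast
  have "sum x e \<le> sum x V" using e sub finV x(1) by (intro sum_mono2) auto
  hence "1 \<le> sum x V" using x e by simp
  thus ?thesis using x inc by (intro exI[of _ x]) auto
qed

end
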